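(* Let $n\in\mathbb N$. Let $\varphi:C(S^1)\to B(H^2(S^1))$ be the symbol map $\varphi(f)=T_f$ and let $\varphi_n$ be its restriction to $C(S^1)_{(n)}$. Then $\varphi_n$ is a unital complete order isomorphism of $C(S^1)_{(n)}$ onto $\mathcal T_{(n)}=\{T_f: f\in C(S^1)_{(n)}\}$.
   Context: $S^1$ is the unit circle, $C(S^1)$ the continuous functions on it, $\hat f(k)$ the $k$-th Fourier coefficient. $C(S^1)_{(n)}$ is the operator system of $f\in C(S^1)$ with $\hat f(k)=0$ for $|k|\ge n$, with matrix ordering: $F\in M_p(C(S^1)_{(n)})$ positive iff $F(z)\ge 0$ for all $z\in S^1$, and unit the constant $1$. $H^2(S^1)\subseteq L^2(S^1)$ is the Hardy space (closed span of $z^k$, $k\ge0$), $P$ the orthogonal projection onto it, $M_f$ multiplication by $f$ on $L^2(S^1)$, and $T_f=PM_f|_{H^2(S^1)}$ is the Toeplitz operator with symbol $f$. $\mathcal T_{(n)}$ is an operator subsystem of $B(H^2(S^1))$. A unital complete order isomorphism is a unit-preserving linear bijection which, together with its inverse, is completely positive. *)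

theory Defs
  imports "HOL-Analysis.Analysis"
begin

text \<open>Functions on the unit circle S^1 are modelled as maps complex => complex;
  to make C(S^1) a genuine set of functions on S^1, we normalise them to 0 off the circle.\<close>

definition S1 :: "complex set" where
  "S1 = sphere 0 1"

definition fourier_coeff :: "(complex \<Rightarrow> complex) \<Rightarrow> int \<Rightarrow> complex" where
  "fourier_coeff f k =
     integral {0..2*pi} (\<lambda>t. f (cis t) * cis (- (of_int k * t))) / complex_of_real (2*pi)"

definition CS1 :: "(complex \<Rightarrow> complex) set" where
  "CS1 = {f. continuous_on S1 f \<and> (\<forall>z. z \<notin> S1 \<longrightarrow> f z = 0)}"

definition CS1n :: "nat \<Rightarrow> (complex \<Rightarrow> complex) set" where
  "CS1n n = {f \<in> CS1. \<forall>k::int. \<bar>k\<bar> \<ge> int n \<longrightarrow> fourier_coeff f k = 0}"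

definition one_S1 :: "complex \<Rightarrow> complex" where
  "one_S1 z = (if z \<in> S1 then 1 else 0)"

text \<open>The Hardy space H^2(S^1), identified with l^2(N) via the orthonormal basis z^k, k \<ge> 0:
  a sequence a represents sum_k a_k z^k.\<close>
definition H2 :: "(nat \<Rightarrow> complex) set" where
  "H2 = {a. summable (\<lambda>k. (cmod (a k))\<^sup>2)}"

definition H2_inner :: "(nat \<Rightarrow> complex) \<Rightarrow> (nat \<Rightarrow> complex) \<Rightarrow> complex" where
  "H2_inner a b = (\<Sum>k. a k * cnj (b k))"

text \<open>Toeplitz operator T_f = P M_f restricted to H^2, written in the basis z^k:
  its matrix entries are <T_f z^k, z^j> = fourier_coeff f (j - k).\<close>
definition toeplitz :: "(complex \<Rightarrow> complex) \<Rightarrow> (nat \<Rightarrow> complex) \<Rightarrow> (nat \<Rightarrow> complex)" where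
  "toeplitz f a = (\<lambda>j. \<Sum>k. fourier_coeff f (int j - int k) * a k)"

definition fun_matrix_pos :: "nat \<Rightarrow> (nat \<Rightarrow> nat \<Rightarrow> complex \<Rightarrow> complex) \<Rightarrow> bool" where
  "fun_matrix_pos p F \<longleftrightarrow>
     (\<forall>z\<in>S1. \<forall>v :: nat \<Rightarrow> complex.
        let q = (\<Sum>i<p. \<Sum>j<p. cnj (v i) * F i j z * v j) in Im q = 0 \<and> Re q \<ge> 0)"

text \<open>Positivity of a p x p matrix of operators on H^2, i.e. of an operator on (H^2)^p.\<close>
definition op_matrix_pos ::
  "nat \<Rightarrow> (nat \<Rightarrow> nat \<Rightarrow> (nat \<Rightarrow> complex) \<Rightarrow> (nat \<Rightarrow> complex)) \<Rightarrow> bool" where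
  "op_matrix_pos p A \<longleftrightarrow>
     (\<forall>\<xi> :: nat \<Rightarrow> nat \<Rightarrow> complex. (\<forall>i<p. \<xi> i \<in> H2) \<longrightarrow>
        (let q = (\<Sum>i<p. \<Sum>j<p. H2_inner (A i j (\<xi> j)) (\<xi> i)) in Im q = 0 \<and> Re q \<ge> 0))"

end

theory Submission
  imports Defs "HOL-Analysis.Analysis"
begin


lemma orth:
  "integral {0..2*pi} (\<lambda>t. cis (of_int k * t)) = (if k = 0 then 2*pi else 0)"
proof (cases "k = 0")
  case True then show ?thesis by (simp add: scaleR_conv_of_real)
next
  case False
  define a where "a = \<i> * of_int k"
  have a0: "a \<noteq> 0" using False by (simp add: a_def)
  have "\<And>t. ((\<lambda>x. exp (a * of_real x) / a) has_vector_derivative exp (a * of_real t)) (at t within {0..2*pi})"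
    using a0
    by (intro derivative_eq_intros has_complex_derivative_imp_has_vector_derivative [unfolded o_def] | simp)+
  then have "((\<lambda>t. exp(a * of_real t)) has_integral exp(a * of_real (2*pi))/a - exp(a * of_real 0)/a)  {0..2*pi}"
    by (intro fundamental_theorem_of_calculus) auto
  moreover have "exp(a * of_real (2*pi)) = 1"
  proof -
    have "exp(a * of_real (2*pi)) = cis (2 * pi * of_int k)" by (simp add: a_def cis_conv_exp mult_ac)
    also have "\<dots> = 1" by (simp add: cis_multiple_2pi)
    finally show ?thesis .
  qed
  moreover have "\<And>t. exp(a * of_real t) = cis (of_int k * t)" by (simp add: a_def cis_conv_exp mult_ac)
  ultimately have "((\<lambda>t. cis (of_int k * t)) has_integral 0) {0..2*pi}" by simp
  then show ?thesis using False by (simp add: integral_unique)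
qed

lemma continuous_on_cis [continuous_intros]:
  "continuous_on A g \<Longrightarrow> continuous_on A (\<lambda>t. cis (g t))"
  unfolding cis_conv_exp by (intro continuous_intros) auto

lemma cis_S1 [simp]: "cis t \<in> S1"
  by (simp add: S1_def)

lemma S1_cis: assumes "z \<in> S1" shows "\<exists>t\<in>{0..2*pi}. z = cis t"
proof -
  have "norm z = 1" using assms by (simp add: S1_def)
  then have "z = cis (Arg2pi z)" by (metis complex_norm_eq_1_exp cis_conv_exp)
  then show ?thesis using Arg2pi_ge_0[of z] Arg2pi_lt_2pi[of z] by force
qed

lemma CS1_cont: assumes "f \<in> CS1" shows "continuous_on A (\<lambda>t. f (cis t))"
proof -
  have "continuous_on S1 f" using assms by (simp add: CS1_def)
  then show ?thesis
    by (rule continuous_on_compose2[of S1 f A cis]) (auto intro: continuous_intros)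
qed

lemma CS1_int:
  assumes "f \<in> CS1" "continuous_on {0..2*pi} g"
  shows "(\<lambda>t. f (cis t) * g t) integrable_on {0..2*pi}"
  by (intro integrable_continuous_interval continuous_intros CS1_cont assms)

lemma fc_integral: "fourier_coeff f k * (2*pi) = integral {0..2*pi} (\<lambda>t. f (cis t) * cis (- (of_int k * t)))"
  by (simp add: fourier_coeff_def)

lemma fc_linear:
  assumes "f \<in> CS1" "g \<in> CS1"
  shows "fourier_coeff (\<lambda>z. f z + c * g z) k = fourier_coeff f k + c * fourier_coeff g k"
proof -
  have i1: "(\<lambda>t. f (cis t) * cis (- (of_int k * t))) integrable_on {0..2*pi}"
    by (rule CS1_int[OF assms(1)]) (intro continuous_intros)
  have i2: "(\<lambda>t. g (cis t) * cis (- (of_int k * t))) integrable_on {0..2*pi}"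
    by (rule CS1_int[OF assms(2)]) (intro continuous_intros)
  have "integral {0..2*pi} (\<lambda>t. (f (cis t) + c * g (cis t)) * cis (- (of_int k * t)))
     = integral {0..2*pi} (\<lambda>t. f (cis t) * cis (- (of_int k * t)) + c * (g (cis t) * cis (- (of_int k * t))))"
    by (simp add: algebra_simps)
  also have "\<dots> = integral {0..2*pi} (\<lambda>t. f (cis t) * cis (- (of_int k * t))) + c * integral {0..2*pi} (\<lambda>t. g (cis t) * cis (- (of_int k * t)))"
    using i1 i2 by (simp add: integral_add integrable_on_mult_right)
  finally show ?thesis by (simp add: fourier_coeff_def add_divide_distrib)
qed

lemma one_S1_CS1: "one_S1 \<in> CS1"
proof -
  have "continuous_on S1 (\<lambda>z. 1::complex)" by simp
  then have "continuous_on S1 one_S1" by (rule continuous_on_cong[THEN iffD1, rotated 2]) (auto simp: one_S1_def)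
  then show ?thesis by (auto simp: CS1_def one_S1_def)
qed

lemma fc_one: "fourier_coeff one_S1 k = (if k = 0 then 1 else 0)"
proof -
  have "integral {0..2*pi} (\<lambda>t. one_S1 (cis t) * cis (- (of_int k * t))) = integral {0..2*pi} (\<lambda>t. cis (of_int (-k) * t))"
    by (simp add: one_S1_def)
  also have "\<dots> = (if -k = 0 then 2*pi else 0)" by (rule orth)
  finally show ?thesis by (simp add: fourier_coeff_def)
qed

lemma suminf_supp:
  fixes a :: "nat \<Rightarrow> 'a::{t2_space,comm_monoid_add,topological_space}"
  assumes "\<And>k. k \<ge> N \<Longrightarrow> a k = 0"
  shows "suminf a = (\<Sum>k<N. a k)"
  by (rule suminf_finite) (auto intro: assms simp: not_less)

lemma toeplitz_supp:
  assumes "\<And>l. l \<ge> N \<Longrightarrow> a l = 0"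
  shows "toeplitz f a j = (\<Sum>l<N. fourier_coeff f (int j - int l) * a l)"
  unfolding toeplitz_def by (rule suminf_supp) (simp add: assms)

lemma toeplitz_fin:
  assumes "f \<in> CS1n n"
  shows "toeplitz f a j = (\<Sum>l<j+n. fourier_coeff f (int j - int l) * a l)"
  unfolding toeplitz_def
proof (rule suminf_supp)
  fix l assume "j + n \<le> l"
  then have "\<bar>int j - int l\<bar> \<ge> int n" by simp
  then show "fourier_coeff f (int j - int l) * a l = 0" using assms by (simp add: CS1n_def)
qed

lemma H2_inner_supp:
  assumes "\<And>k. k \<ge> N \<Longrightarrow> b k = 0"
  shows "H2_inner a b = (\<Sum>k<N. a k * cnj (b k))"
  unfolding H2_inner_def by (rule suminf_supp) (simp add: assms)

inductive trig :: "(real \<Rightarrow> complex) \<Rightarrow> bool" where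
  trig_mono: "trig (\<lambda>t. c * cis (of_int k * t))"
| trig_add: "trig f \<Longrightarrow> trig g \<Longrightarrow> trig (\<lambda>t. f t + g t)"

lemma trig_eq: "trig f \<Longrightarrow> (\<And>t. f t = g t) \<Longrightarrow> trig g"
proof -
  assume "trig f" "\<And>t. f t = g t"
  then have "f = g" by auto
  with \<open>trig f\<close> show ?thesis by simp
qed

lemma trig_const: "trig (\<lambda>t. c)"
  using trig_mono[of c 0] by simp

lemma trig_mult1: "trig g \<Longrightarrow> trig (\<lambda>t. c * cis (of_int k * t) * g t)"
proof (induction rule: trig.induct)
  case (trig_mono d l)
  show ?case
  proof (rule trig_eq[OF trig.trig_mono[of "c*d" "k+l"]])
    fix t show "c * d * cis (of_int (k + l) * t) = c * cis (of_int k * t) * (d * cis (of_int l * t))"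
      by (simp add: cis_mult ring_distribs mult_ac)
  qed
next
  case (trig_add f g)
  show ?case by (rule trig_eq[OF trig.trig_add[OF trig_add.IH]]) (simp add: distrib_left)
qed

lemma trig_mult: "trig f \<Longrightarrow> trig g \<Longrightarrow> trig (\<lambda>t. f t * g t)"
proof (induction rule: trig.induct)
  case (trig_mono c k)
  then show ?case by (rule trig_mult1)
next
  case (trig_add f1 f2)
  show ?case by (rule trig_eq[OF trig.trig_add[OF trig_add.IH[OF trig_add.prems]]]) (simp add: distrib_right)
qed

lemma cos_cis: "complex_of_real (cos t) = (cis t + cis (- t)) / 2"
  by (simp add: complex_eq_iff)

lemma sin_cis: "complex_of_real (sin t) = (cis t - cis (- t)) / (2 * \<i>)"
  by (simp add: complex_eq_iff)

lemma comb: "(A/2 + B/(2*\<i>)) * u + (A/2 - B/(2*\<i>)) * (w::complex) = A * ((u+w)/2) + B*((u-w)/(2*\<i>))"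
  by (simp add: algebra_simps diff_divide_distrib add_divide_distrib)

lemma rpf_trig: "real_polynomial_function p \<Longrightarrow> trig (\<lambda>t. complex_of_real (p (cis t)))"
proof (induction rule: real_polynomial_function.induct)
  case (linear p)
  interpret bounded_linear p by fact
  define A where "A = complex_of_real (p 1)"
  define B where "B = complex_of_real (p \<i>)"
  have pe: "p x = Re x * p 1 + Im x * p \<i>" for x
  proof -
    have "x = Re x *\<^sub>R 1 + Im x *\<^sub>R \<i>" by (simp add: complex_eq_iff)
    then have "p x = p (Re x *\<^sub>R 1 + Im x *\<^sub>R \<i>)" by simp
    also have "\<dots> = Re x * p 1 + Im x * p \<i>" by (simp add: add scale)
    finally show ?thesis .
  qed
  have t: "trig (\<lambda>t. (A/2 + B/(2*\<i>)) * cis (of_int 1 * t) + (A/2 - B/(2*\<i>)) * cis (of_int (-1) * t))"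
    by (intro trig.intros)
  show ?case
  proof (rule trig_eq[OF t])
    fix t
    have "complex_of_real (p (cis t)) = complex_of_real (cos t) * A + complex_of_real (sin t) * B"
      using pe[of "cis t"] by (simp add: A_def B_def)
    also have "\<dots> = A * ((cis t + cis (-t))/2) + B * ((cis t - cis (-t))/(2*\<i>))"
      by (simp only: cos_cis sin_cis mult.commute)
    also have "\<dots> = (A/2 + B/(2*\<i>)) * cis (of_int 1 * t) + (A/2 - B/(2*\<i>)) * cis (of_int (-1) * t)"
      using comb[of A B "cis t" "cis (-t)"] by simp
    finally show "(A/2 + B/(2*\<i>)) * cis (of_int 1 * t) + (A/2 - B/(2*\<i>)) * cis (of_int (-1) * t) = complex_of_real (p (cis t))"
      by simp
  qed
next
  case (const c)
  then show ?case by (rule trig_const)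
next
  case (add f g)
  show ?case by (rule trig_eq[OF trig.trig_add[OF add.IH]]) simp
next
  case (mult f g)
  show ?case by (rule trig_eq[OF trig_mult[OF mult.IH]]) simp
qed

lemma poly_trig:
  fixes g :: "complex \<Rightarrow> complex"
  assumes "polynomial_function g"
  shows "trig (\<lambda>t. g (cis t))"
proof -
  have r1: "real_polynomial_function (\<lambda>x. inner (g x) 1)" and r2: "real_polynomial_function (\<lambda>x. inner (g x) \<i>)"
    using assms by (auto simp: polynomial_function_iff_Basis_inner Basis_complex_def)
  have t: "trig (\<lambda>t. complex_of_real (inner (g (cis t)) 1) + \<i> * complex_of_real (inner (g (cis t)) \<i>))"
    by (intro trig.intros trig_mult trig_const rpf_trig r1 r2)
  show ?thesis
    by (rule trig_eq[OF t]) (simp add: complex_eq_iff inner_complex_def)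
qed

lemma trig_cont: "trig h \<Longrightarrow> continuous_on A h"
  by (induction rule: trig.induct) (intro continuous_intros)+

lemma cnj_cis [simp]: "cnj (cis x) = cis (- x)"
  by (simp add: complex_eq_iff)

lemma trig_orth:
  assumes f: "f \<in> CS1" and fc0: "\<And>k. fourier_coeff f k = 0" and h: "trig h"
  shows "integral {0..2*pi} (\<lambda>t. f (cis t) * cnj (h t)) = 0"
  using h
proof (induction rule: trig.induct)
  case (trig_mono c k)
  have "integral {0..2*pi} (\<lambda>t. f (cis t) * cnj (c * cis (of_int k * t)))
      = integral {0..2*pi} (\<lambda>t. cnj c * (f (cis t) * cis (- (of_int k * t))))"
    by (simp add: mult_ac)
  also have "\<dots> = cnj c * (fourier_coeff f k * (2*pi))"
    by (simp only: integral_mult_right fc_integral)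
  finally show ?case by (simp add: fc0)
next
  case (trig_add g1 g2)
  have i: "(\<lambda>t. f (cis t) * cnj (g t)) integrable_on {0..2*pi}" if "trig g" for g
    by (intro CS1_int f continuous_intros trig_cont that)
  have "integral {0..2*pi} (\<lambda>t. f (cis t) * cnj (g1 t + g2 t))
     = integral {0..2*pi} (\<lambda>t. f (cis t) * cnj (g1 t) + f (cis t) * cnj (g2 t))"
    by (simp add: distrib_left)
  also have "\<dots> = 0" using trig_add i by (simp add: integral_add)
  finally show ?case .
qed

lemma uniq:
  assumes f: "f \<in> CS1" and fc0: "\<And>k. fourier_coeff f k = 0"
  shows "f = (\<lambda>z. 0)"
proof -
  have cS1: "continuous_on S1 f" using f by (simp add: CS1_def)
  have cpt: "compact S1" by (simp add: S1_def)
  have "bounded (f ` S1)" by (intro compact_imp_bounded compact_continuous_image cS1 cpt)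
  then obtain M where M0: "M > 0" and M: "\<And>z. z \<in> S1 \<Longrightarrow> norm (f z) \<le> M"
    by (auto simp: bounded_pos)
  define J where "J = integral {0..2*pi} (\<lambda>t. (cmod (f (cis t)))^2)"
  have cJ: "continuous_on {0..2*pi} (\<lambda>t. (cmod (f (cis t)))^2)"
    by (intro continuous_intros CS1_cont f)
  have iJ: "(\<lambda>t. (cmod (f (cis t)))^2) integrable_on {0..2*pi}"
    by (intro integrable_continuous_interval cJ)
  have J0: "J \<ge> 0" unfolding J_def by (intro integral_nonneg iJ) auto
  have key: "J \<le> M * e * (2*pi)" if e: "e > 0" for e
  proof -
    obtain g where pg: "polynomial_function g" and ge: "\<And>x. x \<in> S1 \<Longrightarrow> norm (f x - g x) < e"
      using Stone_Weierstrass_polynomial_function[OF cpt cS1 e] by blast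
    define h where "h t = g (cis t)" for t
    have th: "trig h" unfolding h_def by (rule poly_trig[OF pg])
    have i1: "(\<lambda>t. f (cis t) * cnj (f (cis t) - h t)) integrable_on {0..2*pi}"
      by (intro CS1_int f continuous_intros CS1_cont trig_cont th)
    have i2: "(\<lambda>t. f (cis t) * cnj (h t)) integrable_on {0..2*pi}"
      by (intro CS1_int f continuous_intros trig_cont th)
    have "complex_of_real J = integral {0..2*pi} (\<lambda>t. complex_of_real ((cmod (f (cis t)))^2))"
      unfolding J_def by (rule integral_unique[symmetric], rule has_integral_of_real, rule integrable_integral[OF iJ])
    also have "\<dots> = integral {0..2*pi} (\<lambda>t. f (cis t) * cnj (f (cis t) - h t) + f (cis t) * cnj (h t))"
    proof (rule integral_cong)
      fix t
      have "complex_of_real ((cmod (f (cis t)))^2) = f (cis t) * cnj (f (cis t))" by (rule complex_norm_square)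
      then show "complex_of_real ((cmod (f (cis t)))^2) = f (cis t) * cnj (f (cis t) - h t) + f (cis t) * cnj (h t)"
        by (simp add: algebra_simps)
    qed
    also have "\<dots> = integral {0..2*pi} (\<lambda>t. f (cis t) * cnj (f (cis t) - h t))"
      using i1 i2 trig_orth[OF f fc0 th] by (simp add: integral_add)
    finally have eq: "complex_of_real J = integral {0..2*pi} (\<lambda>t. f (cis t) * cnj (f (cis t) - h t))" .
    have "norm (integral {0..2*pi} (\<lambda>t. f (cis t) * cnj (f (cis t) - h t))) \<le> (M * e) * Henstock_Kurzweil_Integration.content (cbox 0 (2*pi))"
    proof (rule has_integral_bound)
      show "0 \<le> M * e" using M0 e by simp
      show "((\<lambda>t. f (cis t) * cnj (f (cis t) - h t)) has_integral integral {0..2*pi} (\<lambda>t. f (cis t) * cnj (f (cis t) - h t))) (cbox 0 (2*pi))"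
        using i1 by (simp add: integrable_integral)
      fix t :: real
      have "norm (f (cis t) * cnj (f (cis t) - h t)) = norm (f (cis t)) * norm (f (cis t) - g (cis t))"
        by (simp add: norm_mult h_def flip: complex_cnj_diff)
      also have "\<dots> \<le> M * e"
        using M[of "cis t"] ge[of "cis t"] M0 by (intro mult_mono) auto
      finally show "norm (f (cis t) * cnj (f (cis t) - h t)) \<le> M * e" .
    qed
    then have "norm (complex_of_real J) \<le> M * e * (2*pi)" using eq by simp
    then show ?thesis using J0 by simp
  qed
  have "J = 0"
  proof (rule ccontr)
    assume "J \<noteq> 0"
    then have Jp: "J > 0" using J0 by simp
    have "J \<le> M * (J / (4*pi*M)) * (2*pi)" using key[of "J / (4*pi*M)"] Jp M0 by simp
    also have "\<dots> = J / 2" using M0 by (simp add: field_simps)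
    finally show False using Jp by simp
  qed
  then have z: "\<forall>t\<in>{0..2*pi}. (cmod (f (cis t)))^2 = 0"
    using integral_eq_0_iff[OF cJ] unfolding J_def by simp
  show ?thesis
  proof
    fix z show "f z = 0"
    proof (cases "z \<in> S1")
      case True
      then obtain t where "t \<in> {0..2*pi}" "z = cis t" using S1_cis by blast
      then show ?thesis using z by auto
    next
      case False then show ?thesis using f by (simp add: CS1_def)
    qed
  qed
qed

lemma fc_zero_out: "f \<in> CS1n n \<Longrightarrow> d \<notin> {-int n<..<int n} \<Longrightarrow> fourier_coeff f d = 0"
  by (auto simp: CS1n_def)

lemma inversion:
  assumes f: "f \<in> CS1n n"
  shows "f (cis s) = (\<Sum>d\<in>{-int n<..<int n}. fourier_coeff f d * cis (of_int d * s))"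
proof -
  define D where "D = {-int n<..<int n}"
  have fD: "finite D" by (simp add: D_def)
  define h where "h z = (if z \<in> S1 then (\<Sum>d\<in>D. fourier_coeff f d * z powi d) else 0)" for z
  have fCS1: "f \<in> CS1" using f by (simp add: CS1n_def)
  have "continuous_on S1 (\<lambda>z. \<Sum>d\<in>D. fourier_coeff f d * z powi d)"
    by (intro continuous_intros) (auto simp: S1_def)
  then have "continuous_on S1 h"
    by (rule continuous_on_cong[THEN iffD1, rotated 2]) (auto simp: h_def)
  then have hCS1: "h \<in> CS1" by (auto simp: CS1_def h_def)
  have hcis: "h (cis t) = (\<Sum>d\<in>D. fourier_coeff f d * cis (of_int d * t))" for t
    by (simp add: h_def cis_power_int)
  have fch: "fourier_coeff h k = (if k \<in> D then fourier_coeff f k else 0)" for k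
  proof -
    have "integral {0..2*pi} (\<lambda>t. h (cis t) * cis (- (of_int k * t)))
        = integral {0..2*pi} (\<lambda>t. \<Sum>d\<in>D. fourier_coeff f d * cis (of_int (d - k) * t))"
    proof (rule integral_cong)
      fix t
      have "h (cis t) * cis (-(of_int k * t)) = (\<Sum>d\<in>D. fourier_coeff f d * (cis (of_int d * t) * cis (-(of_int k * t))))"
        by (simp add: hcis sum_distrib_right mult.assoc)
      then show "h (cis t) * cis (-(of_int k * t)) = (\<Sum>d\<in>D. fourier_coeff f d * cis (of_int (d - k) * t))"
        by (simp add: cis_mult left_diff_distrib)
    qed
    also have "\<dots> = (\<Sum>d\<in>D. fourier_coeff f d * integral {0..2*pi} (\<lambda>t. cis (of_int (d - k) * t)))"
      by (subst integral_sum[OF fD]) (auto intro!: integrable_continuous_interval continuous_intros)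
    also have "\<dots> = (\<Sum>d\<in>D. if d = k then fourier_coeff f d * (2*pi) else 0)"
      by (intro sum.cong refl) (subst orth, simp add: scaleR_conv_of_real)
    also have "\<dots> = (if k \<in> D then fourier_coeff f k * (2*pi) else 0)"
      using fD by (simp add: sum.delta)
    finally show ?thesis by (simp add: fourier_coeff_def)
  qed
  have "fourier_coeff (\<lambda>z. f z + (-1) * h z) k = 0" for k
    using fc_zero_out[OF f, of k] fc_linear[OF fCS1 hCS1, of "-1" k] by (simp add: fch D_def)
  moreover have "(\<lambda>z. f z + (-1) * h z) \<in> CS1"
    using fCS1 hCS1 unfolding CS1_def by (auto intro: continuous_intros)
  ultimately have "(\<lambda>z. f z + (-1) * h z) = (\<lambda>z. 0)" using uniq by blast
  then have "f (cis s) + (-1) * h (cis s) = 0" by meson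
  then show ?thesis by (simp add: hcis D_def)
qed



lemma H2_supp: "(\<And>k. k \<ge> N \<Longrightarrow> x k = 0) \<Longrightarrow> x \<in> H2"
  unfolding H2_def mem_Collect_eq by (rule summable_finite[of "{..<N}"]) (auto simp: not_less)

lemma CS1_lin: "f \<in> CS1 \<Longrightarrow> g \<in> CS1 \<Longrightarrow> (\<lambda>z. f z + c * g z) \<in> CS1"
  unfolding CS1_def by (auto intro!: continuous_intros)

lemma CS1n_lin:
  assumes "f \<in> CS1n n" "g \<in> CS1n n"
  shows "(\<lambda>z. f z + c * g z) \<in> CS1n n"
  using assms fc_linear[of f g c] CS1_lin[of f g c] by (auto simp: CS1n_def)

lemma part_linear:
  assumes "f \<in> CS1n n" "g \<in> CS1n n"
  shows "toeplitz (\<lambda>z. f z + c * g z) a = (\<lambda>j. toeplitz f a j + c * toeplitz g a j)"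
proof
  fix j
  have fc: "f \<in> CS1" "g \<in> CS1" using assms by (auto simp: CS1n_def)
  show "toeplitz (\<lambda>z. f z + c * g z) a j = toeplitz f a j + c * toeplitz g a j"
    unfolding toeplitz_fin[OF CS1n_lin[OF assms]] toeplitz_fin[OF assms(1)] toeplitz_fin[OF assms(2)]
    by (simp add: fc_linear[OF fc] algebra_simps sum.distrib sum_distrib_left)
qed

lemma part_unital: "toeplitz one_S1 a = a"
proof
  fix j
  have "toeplitz one_S1 a j = (\<Sum>l<Suc j. fourier_coeff one_S1 (int j - int l) * a l)"
    unfolding toeplitz_def by (rule suminf_supp) (simp add: fc_one)
  also have "\<dots> = (\<Sum>l<Suc j. if l = j then a l else 0)"
    by (intro sum.cong refl) (simp add: fc_one)
  also have "\<dots> = a j" by simp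
  finally show "toeplitz one_S1 a j = a j" .
qed

lemma toeplitz_delta: "toeplitz f (\<lambda>l. if l = m then 1 else 0) j = fourier_coeff f (int j - int m)"
proof -
  have "toeplitz f (\<lambda>l. if l = m then 1 else 0) j = (\<Sum>l<Suc m. fourier_coeff f (int j - int l) * (if l = m then 1 else 0))"
    by (rule toeplitz_supp) simp
  also have "\<dots> = fourier_coeff f (int j - int m)" by (simp add: if_distrib cong: if_cong)
  finally show ?thesis .
qed

lemma part_inj:
  assumes f: "f \<in> CS1n n" and g: "g \<in> CS1n n" and eq: "\<forall>a\<in>H2. toeplitz f a = toeplitz g a"
  shows "f = g"
proof -
  have fc: "f \<in> CS1" "g \<in> CS1" using assms by (auto simp: CS1n_def)
  have fceq: "fourier_coeff f k = fourier_coeff g k" for k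
  proof -
    have "\<exists>j m. k = int j - int m" by (rule exI[of _ "nat k"], rule exI[of _ "nat (-k)"]) simp
    then obtain j m where k: "k = int j - int m" by blast
    have "(\<lambda>l. if l = m then 1 else 0 :: complex) \<in> H2" by (rule H2_supp[of "Suc m"]) simp
    then have "toeplitz f (\<lambda>l. if l = m then 1 else 0) j = toeplitz g (\<lambda>l. if l = m then 1 else 0) j"
      using eq by simp
    then show ?thesis by (simp add: toeplitz_delta k)
  qed
  have "fourier_coeff (\<lambda>z. f z + (-1) * g z) k = 0" for k
    using fc_linear[OF fc, of "-1" k] fceq[of k] by simp
  then have "(\<lambda>z. f z + (-1) * g z) = (\<lambda>z. 0)" using uniq CS1_lin[OF fc, of "-1"] by blast
  then have h0: "f z + (-1) * g z = 0" for z by (rule fun_cong)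
  have "f z = g z" for z using h0[of z] by simp
  then show ?thesis by (intro ext) blast
qed

definition qf :: "nat \<Rightarrow> (nat \<Rightarrow> nat \<Rightarrow> complex \<Rightarrow> complex) \<Rightarrow> (nat \<Rightarrow> nat \<Rightarrow> complex) \<Rightarrow> complex" where
  "qf p F \<xi> = (\<Sum>i<p. \<Sum>j<p. H2_inner (toeplitz (F i j) (\<xi> j)) (\<xi> i))"

definition psd :: "complex \<Rightarrow> bool" where
  "psd q \<longleftrightarrow> Im q = 0 \<and> 0 \<le> Re q"

lemma op_pos_iff: "op_matrix_pos p (\<lambda>i j. toeplitz (F i j)) \<longleftrightarrow> (\<forall>\<xi>. (\<forall>i<p. \<xi> i \<in> H2) \<longrightarrow> psd (qf p F \<xi>))"
  by (simp add: op_matrix_pos_def qf_def psd_def Let_def)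

lemma fun_pos_iff: "fun_matrix_pos p F \<longleftrightarrow> (\<forall>z\<in>S1. \<forall>v. psd (\<Sum>i<p. \<Sum>j<p. cnj (v i) * F i j z * v j))"
  by (simp add: fun_matrix_pos_def psd_def Let_def)

lemma qf_fin:
  assumes "\<And>i k. i < p \<Longrightarrow> k \<ge> N \<Longrightarrow> \<xi> i k = 0"
  shows "qf p F \<xi> = (\<Sum>i<p. \<Sum>j<p. \<Sum>k<N. \<Sum>l<N. fourier_coeff (F i j) (int k - int l) * (\<xi> j l * cnj (\<xi> i k)))"
  unfolding qf_def
proof (intro sum.cong refl)
  fix i j assume i: "i \<in> {..<p}" and j: "j \<in> {..<p}"
  have "H2_inner (toeplitz (F i j) (\<xi> j)) (\<xi> i) = (\<Sum>k<N. toeplitz (F i j) (\<xi> j) k * cnj (\<xi> i k))"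
    by (rule H2_inner_supp) (use i assms in auto)
  also have "\<dots> = (\<Sum>k<N. (\<Sum>l<N. fourier_coeff (F i j) (int k - int l) * \<xi> j l) * cnj (\<xi> i k))"
    by (intro sum.cong refl arg_cong2[where f="(*)"] toeplitz_supp) (use j assms in auto)
  also have "\<dots> = (\<Sum>k<N. \<Sum>l<N. fourier_coeff (F i j) (int k - int l) * (\<xi> j l * cnj (\<xi> i k)))"
    by (simp add: sum_distrib_right sum_distrib_left mult_ac)
  finally show "H2_inner (toeplitz (F i j) (\<xi> j)) (\<xi> i) = (\<Sum>k<N. \<Sum>l<N. fourier_coeff (F i j) (int k - int l) * (\<xi> j l * cnj (\<xi> i k)))" .
qed

lemma psd_integral:
  assumes "(\<phi> has_integral I) {a..b}" "\<And>t. psd (\<phi> t)"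
  shows "psd I"
proof -
  have "((\<lambda>t. Im (\<phi> t)) has_integral Im I) {a..b}" by (rule has_integral_Im[OF assms(1)])
  moreover have "(\<lambda>t. Im (\<phi> t)) = (\<lambda>t. 0)" using assms(2) by (auto simp: psd_def)
  ultimately have "Im I = 0" using has_integral_unique has_integral_0 by metis
  moreover have "0 \<le> Re I"
    by (rule has_integral_nonneg[OF has_integral_Re[OF assms(1)]]) (use assms(2) in \<open>auto simp: psd_def\<close>)
  ultimately show ?thesis by (simp add: psd_def)
qed

lemma fwd_fin:
  assumes fp: "fun_matrix_pos p F" and FC: "\<And>i j. i < p \<Longrightarrow> j < p \<Longrightarrow> F i j \<in> CS1"
    and supp: "\<And>i k. i < p \<Longrightarrow> k \<ge> N \<Longrightarrow> \<xi> i k = 0"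
  shows "psd (qf p F \<xi>)"
proof -
  define X where "X i t = (\<Sum>k<N. \<xi> i k * cis (of_nat k * t))" for i t
  define \<phi> where "\<phi> t = (\<Sum>i<p. \<Sum>j<p. cnj (X i t) * F i j (cis t) * X j t)" for t
  define T where "T i j k l t = F i j (cis t) * cis (- (of_int (int k - int l) * t)) * (\<xi> j l * cnj (\<xi> i k))" for i j k l t
  have pw: "\<phi> t = (\<Sum>i<p. \<Sum>j<p. \<Sum>k<N. \<Sum>l<N. T i j k l t)" for t
    unfolding \<phi>_def
  proof (intro sum.cong refl)
    fix i j
    have "cnj (X i t) * F i j (cis t) * X j t = (\<Sum>k<N. cnj (\<xi> i k) * cis (- (of_nat k * t))) * F i j (cis t) * (\<Sum>l<N. \<xi> j l * cis (of_nat l * t))"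
      by (simp add: X_def)
    also have "\<dots> = (\<Sum>k<N. (cnj (\<xi> i k) * cis (- (of_nat k * t))) * F i j (cis t) * (\<Sum>l<N. \<xi> j l * cis (of_nat l * t)))"
      by (simp only: sum_distrib_right)
    also have "\<dots> = (\<Sum>k<N. \<Sum>l<N. (cnj (\<xi> i k) * cis (- (of_nat k * t))) * F i j (cis t) * (\<xi> j l * cis (of_nat l * t)))"
      by (simp only: sum_distrib_left)
    also have "\<dots> = (\<Sum>k<N. \<Sum>l<N. T i j k l t)"
    proof (intro sum.cong refl)
      fix k l
      have "cis (- (of_nat k * t)) * cis (of_nat l * t) = cis (- (of_int (int k - int l) * t))"
        by (simp add: cis_mult algebra_simps)
      then show "(cnj (\<xi> i k) * cis (- (of_nat k * t))) * F i j (cis t) * (\<xi> j l * cis (of_nat l * t)) = T i j k l t"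
        unfolding T_def by (metis (no_types, lifting) mult.assoc mult.commute mult.left_commute)
    qed
    finally show "cnj (X i t) * F i j (cis t) * X j t = (\<Sum>k<N. \<Sum>l<N. T i j k l t)" .
  qed
  have Tint: "((T i j k l) has_integral (fourier_coeff (F i j) (int k - int l) * (2*pi) * (\<xi> j l * cnj (\<xi> i k)))) {0..2*pi}"
    if "i < p" "j < p" for i j k l
  proof -
    have "(\<lambda>t. F i j (cis t) * cis (- (of_int (int k - int l) * t))) integrable_on {0..2*pi}"
      by (intro CS1_int FC that continuous_intros)
    then have "((\<lambda>t. F i j (cis t) * cis (- (of_int (int k - int l) * t))) has_integral (fourier_coeff (F i j) (int k - int l) * (2*pi))) {0..2*pi}"
      unfolding fc_integral by (rule integrable_integral)
    then show ?thesis unfolding T_def[abs_def] by (rule has_integral_mult_left)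
  qed
  have "(\<phi> has_integral (\<Sum>i<p. \<Sum>j<p. \<Sum>k<N. \<Sum>l<N. fourier_coeff (F i j) (int k - int l) * (2*pi) * (\<xi> j l * cnj (\<xi> i k)))) {0..2*pi}"
    unfolding pw[abs_def] by (intro has_integral_sum finite_lessThan Tint) auto
  also have "(\<Sum>i<p. \<Sum>j<p. \<Sum>k<N. \<Sum>l<N. fourier_coeff (F i j) (int k - int l) * (2*pi) * (\<xi> j l * cnj (\<xi> i k))) = (2*pi) * qf p F \<xi>"
    by (simp add: qf_fin[OF supp] sum_distrib_left mult_ac)
  finally have hi: "(\<phi> has_integral (2*pi) * qf p F \<xi>) {0..2*pi}" .
  have "psd (\<phi> t)" for t
    using fp unfolding fun_pos_iff \<phi>_def by auto
  then have "psd ((2*pi) * qf p F \<xi>)" by (rule psd_integral[OF hi])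
  then show ?thesis using pi_gt_zero by (auto simp add: psd_def zero_le_mult_iff)
qed

definition shx :: "(nat \<Rightarrow> complex) \<Rightarrow> int \<Rightarrow> nat \<Rightarrow> complex" where
  "shx x d k = (if int k - d \<ge> 0 then x (nat (int k - d)) else 0)"

definition Sh :: "int \<Rightarrow> (nat \<Rightarrow> complex) \<Rightarrow> (nat \<Rightarrow> complex) \<Rightarrow> complex" where
  "Sh d x y = (\<Sum>k. shx x d k * cnj (y k))"

definition tr :: "nat \<Rightarrow> (nat \<Rightarrow> complex) \<Rightarrow> (nat \<Rightarrow> complex)" where
  "tr N x = (\<lambda>k. if k < N then x k else 0)"

lemma tr_H2: "tr N x \<in> H2"
  by (rule H2_supp[of N]) (simp add: tr_def)

lemma toeplitz_shift:
  assumes f: "f \<in> CS1n n"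
  shows "toeplitz f x k = (\<Sum>d\<in>{-int n<..<int n}. fourier_coeff f d * shx x d k)"
proof -
  let ?D = "{-int n<..<int n}"
  have "toeplitz f x k = (\<Sum>l<k+n. fourier_coeff f (int k - int l) * x l)"
    by (rule toeplitz_fin[OF f])
  also have "\<dots> = (\<Sum>d\<in>?D. fourier_coeff f d * shx x d k)"
  proof (rule sum.reindex_bij_witness_not_neutral[where S'="{l\<in>{..<k+n}. int k - int l \<notin> ?D}"
        and T'="?D \<inter> {int k<..}" and i="\<lambda>d. nat (int k - d)" and j="\<lambda>l. int k - int l"])
    fix a assume "a \<in> {l\<in>{..<k+n}. int k - int l \<notin> ?D}"
    then show "fourier_coeff f (int k - int a) * x a = 0" using fc_zero_out[OF f] by auto
  next
    fix a assume "a \<in> {..<k+n}"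
    then show "fourier_coeff f (int k - int a) * shx x (int k - int a) k = fourier_coeff f (int k - int a) * x a"
      by (simp add: shx_def)
  qed (auto simp: shx_def)
  finally show ?thesis .
qed

lemma shx_sq_summable:
  assumes "x \<in> H2" shows "summable (\<lambda>k. (cmod (shx x d k))^2)"
proof (cases "d \<ge> 0")
  case True
  define m where "m = nat d"
  have "(\<lambda>k. (cmod (shx x d (k + m)))^2) = (\<lambda>k. (cmod (x k))^2)"
    using True by (simp add: shx_def m_def)
  then have "summable (\<lambda>k. (cmod (shx x d (k + m)))^2)" using assms by (simp add: H2_def)
  then show ?thesis by (rule summable_iff_shift[THEN iffD1])
next
  case False
  define m where "m = nat (-d)"
  have "(\<lambda>k. (cmod (shx x d k))^2) = (\<lambda>k. (cmod (x (k + m)))^2)"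
  proof (intro ext)
    fix k
    have "nat (int k - d) = k + m" using False by (simp add: m_def)
    then show "(cmod (shx x d k))^2 = (cmod (x (k + m)))^2" using False by (simp add: shx_def)
  qed
  moreover have "summable (\<lambda>k. (cmod (x (k + m)))^2)"
    using assms by (simp add: H2_def summable_iff_shift[where f="\<lambda>k. (cmod (x k))^2"])
  ultimately show ?thesis by simp
qed

lemma prod_bound: "cmod (a * cnj b) \<le> (cmod a)^2 + (cmod b)^2"
proof -
  have "0 \<le> (cmod a - cmod b)^2" by simp
  then have "2 * (cmod a * cmod b) \<le> (cmod a)^2 + (cmod b)^2" by (simp add: power2_diff)
  moreover have "0 \<le> cmod a * cmod b" by simp
  ultimately show ?thesis unfolding norm_mult complex_mod_cnj by linarith
qed

lemma shx_summable:
  assumes "x \<in> H2" "y \<in> H2" shows "summable (\<lambda>k. shx x d k * cnj (y k))"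
proof (rule summable_comparison_test'[where N=0])
  show "summable (\<lambda>k. (cmod (shx x d k))^2 + (cmod (y k))^2)"
    using shx_sq_summable[OF assms(1)] assms(2) by (intro summable_add) (auto simp: H2_def)
qed (rule prod_bound)

lemma H2_inner_shift:
  assumes f: "f \<in> CS1n n" and x: "x \<in> H2" and y: "y \<in> H2"
  shows "H2_inner (toeplitz f x) y = (\<Sum>d\<in>{-int n<..<int n}. fourier_coeff f d * Sh d x y)"
proof -
  have "H2_inner (toeplitz f x) y = (\<Sum>k. \<Sum>d\<in>{-int n<..<int n}. fourier_coeff f d * (shx x d k * cnj (y k)))"
    unfolding H2_inner_def toeplitz_shift[OF f] by (simp add: sum_distrib_right sum_distrib_left mult_ac)
  also have "\<dots> = (\<Sum>d\<in>{-int n<..<int n}. \<Sum>k. fourier_coeff f d * (shx x d k * cnj (y k)))"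
    by (rule suminf_sum) (intro summable_mult shx_summable x y)
  also have "\<dots> = (\<Sum>d\<in>{-int n<..<int n}. fourier_coeff f d * Sh d x y)"
    unfolding Sh_def by (intro sum.cong refl suminf_mult shx_summable x y)
  finally show ?thesis .
qed

lemma Sh_tr_lim:
  assumes x: "x \<in> H2" and y: "y \<in> H2"
  shows "(\<lambda>N. Sh d (tr N x) (tr N y)) \<longlonglongrightarrow> Sh d x y"
proof -
  have lim: "(\<lambda>N. \<Sum>k<N. shx x d k * cnj (y k)) \<longlonglongrightarrow> Sh d x y"
    unfolding Sh_def by (rule summable_LIMSEQ[OF shx_summable[OF x y]])
  show ?thesis
  proof (cases "d \<ge> 0")
    case True
    have "Sh d (tr N x) (tr N y) = (\<Sum>k<N. shx x d k * cnj (y k))" for N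
      unfolding Sh_def
    proof (subst suminf_supp[of N])
      show "(\<Sum>k<N. shx (tr N x) d k * cnj (tr N y k)) = (\<Sum>k<N. shx x d k * cnj (y k))"
        using True by (intro sum.cong refl) (auto simp: shx_def tr_def)
    qed (simp add: tr_def)
    then show ?thesis using lim by simp
  next
    case False
    define m where "m = nat (-d)"
    have "Sh d (tr (N + m) x) (tr (N + m) y) = (\<Sum>k<N. shx x d k * cnj (y k))" for N
      unfolding Sh_def
    proof (subst suminf_supp[of N])
      show "(\<Sum>k<N. shx (tr (N + m) x) d k * cnj (tr (N + m) y k)) = (\<Sum>k<N. shx x d k * cnj (y k))"
        using False by (intro sum.cong refl) (auto simp: shx_def tr_def m_def)
    next
      fix k assume "N \<le> k"
      then show "shx (tr (N + m) x) d k * cnj (tr (N + m) y k) = 0"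
        using False by (auto simp: shx_def tr_def m_def)
    qed
    then have "(\<lambda>N. Sh d (tr (N + m) x) (tr (N + m) y)) \<longlonglongrightarrow> Sh d x y" using lim by simp
    then show ?thesis by (rule LIMSEQ_offset)
  qed
qed

lemma fwd:
  assumes fp: "fun_matrix_pos p F" and FC: "\<And>i j. i < p \<Longrightarrow> j < p \<Longrightarrow> F i j \<in> CS1n n"
    and xi: "\<And>i. i < p \<Longrightarrow> \<xi> i \<in> H2"
  shows "psd (qf p F \<xi>)"
proof -
  let ?D = "{-int n<..<int n}"
  define \<xi>N where "\<xi>N N = (\<lambda>i. tr N (\<xi> i))" for N
  have FC1: "F i j \<in> CS1" if "i < p" "j < p" for i j using FC[OF that] by (simp add: CS1n_def)
  have fin: "psd (qf p F (\<xi>N N))" for N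
    by (rule fwd_fin[OF fp FC1, where N=N]) (auto simp: \<xi>N_def tr_def)
  have eqN: "qf p F (\<xi>N N) = (\<Sum>i<p. \<Sum>j<p. \<Sum>d\<in>?D. fourier_coeff (F i j) d * Sh d (tr N (\<xi> j)) (tr N (\<xi> i)))" for N
    unfolding qf_def \<xi>N_def by (intro sum.cong refl H2_inner_shift FC tr_H2) auto
  have eq: "qf p F \<xi> = (\<Sum>i<p. \<Sum>j<p. \<Sum>d\<in>?D. fourier_coeff (F i j) d * Sh d (\<xi> j) (\<xi> i))"
    unfolding qf_def by (intro sum.cong refl H2_inner_shift FC xi) auto
  have lim: "(\<lambda>N. qf p F (\<xi>N N)) \<longlonglongrightarrow> qf p F \<xi>"
    unfolding eqN eq by (intro tendsto_sum tendsto_mult_left Sh_tr_lim xi) auto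
  have "(\<lambda>N. Im (qf p F (\<xi>N N))) \<longlonglongrightarrow> Im (qf p F \<xi>)" by (rule tendsto_Im[OF lim])
  moreover have "(\<lambda>N. Im (qf p F (\<xi>N N))) = (\<lambda>N. 0)" using fin by (simp add: psd_def)
  ultimately have "Im (qf p F \<xi>) = 0" using LIMSEQ_unique tendsto_const by metis
  moreover have "0 \<le> Re (qf p F \<xi>)"
    by (rule LIMSEQ_le_const[OF tendsto_Re[OF lim]]) (use fin in \<open>auto simp: psd_def\<close>)
  ultimately show ?thesis by (simp add: psd_def)
qed

lemma sum4_swap:
  "(\<Sum>i\<in>A. \<Sum>j\<in>B. \<Sum>k\<in>C. \<Sum>l\<in>E. X i j k l) = (\<Sum>k\<in>C. \<Sum>l\<in>E. \<Sum>i\<in>A. \<Sum>j\<in>B. X i j k l)"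
proof -
  have "(\<Sum>i\<in>A. \<Sum>j\<in>B. \<Sum>k\<in>C. \<Sum>l\<in>E. X i j k l) = (\<Sum>i\<in>A. \<Sum>k\<in>C. \<Sum>j\<in>B. \<Sum>l\<in>E. X i j k l)"
    by (rule sum.cong[OF refl], rule sum.swap)
  also have "\<dots> = (\<Sum>k\<in>C. \<Sum>i\<in>A. \<Sum>j\<in>B. \<Sum>l\<in>E. X i j k l)" by (rule sum.swap)
  also have "\<dots> = (\<Sum>k\<in>C. \<Sum>i\<in>A. \<Sum>l\<in>E. \<Sum>j\<in>B. X i j k l)"
    by (rule sum.cong[OF refl], rule sum.cong[OF refl], rule sum.swap)
  also have "\<dots> = (\<Sum>k\<in>C. \<Sum>l\<in>E. \<Sum>i\<in>A. \<Sum>j\<in>B. X i j k l)"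
    by (rule sum.cong[OF refl], rule sum.swap)
  finally show ?thesis .
qed

lemma sum_neg_part: "(\<Sum>k<N. H (int k - int N)) = (\<Sum>d\<in>{-int N..<0}. (H d :: complex))"
  by (rule sum.reindex_bij_witness[where i="\<lambda>d. nat (d + int N)" and j="\<lambda>k. int k - int N"]) auto

lemma sum_pos_part: "(\<Sum>l<N. H (int N - int l)) = (\<Sum>d\<in>{0<..int N}. (H d :: complex))"
  by (rule sum.reindex_bij_witness[where i="\<lambda>d. nat (int N - d)" and j="\<lambda>l. int N - int l"]) auto

lemma Q_step:
  "(\<Sum>k<Suc N. \<Sum>l<Suc N. H (int k - int l)) = (\<Sum>k<N. \<Sum>l<N. H (int k - int l)) + (\<Sum>d\<in>{-int N..int N}. (H d :: complex))"
proof -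
  have split: "{-int N..int N} = insert 0 ({-int N..<0} \<union> {0<..int N})" by auto
  have "(\<Sum>d\<in>{-int N..int N}. H d) = H 0 + ((\<Sum>d\<in>{-int N..<0}. H d) + (\<Sum>d\<in>{0<..int N}. H d))"
    unfolding split by (subst sum.insert) (auto intro: sum.union_disjoint)
  then show ?thesis
    by (simp add: sum.distrib sum_neg_part sum_pos_part)
qed

lemma bwd:
  assumes op: "\<And>\<xi>. (\<forall>i<p. \<xi> i \<in> H2) \<Longrightarrow> psd (qf p F \<xi>)"
    and FC: "\<And>i j. i < p \<Longrightarrow> j < p \<Longrightarrow> F i j \<in> CS1n n"
    and z: "z \<in> S1"
  shows "psd (\<Sum>i<p. \<Sum>j<p. cnj (v i) * F i j z * v j)"
proof -
  let ?D = "{-int n<..<int n}"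
  obtain s where zs: "z = cis s" using S1_cis[OF z] by blast
  define H where "H d = (\<Sum>i<p. \<Sum>j<p. fourier_coeff (F i j) d * (v j * cnj (v i)) * cis (of_int d * s))" for d
  define \<xi>N where "\<xi>N N i k = (if k < N then v i * cis (- (of_nat k * s)) else 0)" for N i k
  define Q where "Q N = (\<Sum>k<N. \<Sum>l<N. H (int k - int l))" for N
  define G where "G = (\<Sum>d\<in>?D. H d)"
  have qN: "qf p F (\<xi>N N) = Q N" for N
  proof -
    have "qf p F (\<xi>N N) = (\<Sum>i<p. \<Sum>j<p. \<Sum>k<N. \<Sum>l<N. fourier_coeff (F i j) (int k - int l) * (\<xi>N N j l * cnj (\<xi>N N i k)))"
      by (rule qf_fin) (simp add: \<xi>N_def)
    also have "\<dots> = (\<Sum>i<p. \<Sum>j<p. \<Sum>k<N. \<Sum>l<N. fourier_coeff (F i j) (int k - int l) * (v j * cnj (v i)) * cis (of_int (int k - int l) * s))"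
    proof (intro sum.cong refl)
      fix i j k l assume k: "k \<in> {..<N}" and l: "l \<in> {..<N}"
      have "cis (- (of_nat l * s)) * cis (of_nat k * s) = cis (of_int (int k - int l) * s)"
        by (simp add: cis_mult algebra_simps)
      then show "fourier_coeff (F i j) (int k - int l) * (\<xi>N N j l * cnj (\<xi>N N i k)) = fourier_coeff (F i j) (int k - int l) * (v j * cnj (v i)) * cis (of_int (int k - int l) * s)"
        using k l by (simp add: \<xi>N_def mult_ac)
    qed
    also have "\<dots> = Q N" unfolding Q_def H_def by (rule sum4_swap)
    finally show ?thesis .
  qed
  have psdQ: "psd (Q N)" for N
  proof -
    have "\<forall>i<p. \<xi>N N i \<in> H2" by (auto intro!: H2_supp[of N] simp: \<xi>N_def)
    then show ?thesis using op qN by metis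
  qed
  have H0: "H d = 0" if "d \<notin> ?D" for d
    unfolding H_def using fc_zero_out[OF FC that] by simp
  have QS: "Q (Suc N) = Q N + G" if "N \<ge> n" for N
  proof -
    have "Q (Suc N) = Q N + (\<Sum>d\<in>{-int N..int N}. H d)" unfolding Q_def by (rule Q_step)
    also have "(\<Sum>d\<in>{-int N..int N}. H d) = G"
      unfolding G_def using that by (intro sum.mono_neutral_right) (auto intro!: H0)
    finally show ?thesis .
  qed
  have Qm: "Q (n + m) = Q n + of_nat m * G" for m
    by (induction m) (simp_all add: QS algebra_simps)
  have G: "G = (\<Sum>i<p. \<Sum>j<p. cnj (v i) * F i j z * v j)"
  proof -
    have "(\<Sum>i<p. \<Sum>j<p. cnj (v i) * F i j z * v j) = (\<Sum>i<p. \<Sum>j<p. \<Sum>d\<in>?D. fourier_coeff (F i j) d * (v j * cnj (v i)) * cis (of_int d * s))"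
      unfolding zs by (intro sum.cong refl) (simp add: inversion[OF FC] sum_distrib_left sum_distrib_right mult_ac)
    also have "\<dots> = (\<Sum>i<p. \<Sum>d\<in>?D. \<Sum>j<p. fourier_coeff (F i j) d * (v j * cnj (v i)) * cis (of_int d * s))"
      by (rule sum.cong[OF refl], rule sum.swap)
    also have "\<dots> = G" unfolding G_def H_def by (rule sum.swap)
    finally show ?thesis by simp
  qed
  have "Im (Q (n + 1)) = 0" "Im (Q n) = 0" using psdQ by (auto simp: psd_def)
  then have ImG: "Im G = 0" using Qm[of 1] by simp
  have ReG: "0 \<le> Re G"
  proof (rule ccontr)
    assume "\<not> 0 \<le> Re G"
    then have "0 < - Re G" by simp
    then obtain m where m: "Re (Q n) < of_nat m * (- Re G)" using ex_less_of_nat_mult by blast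
    have "0 \<le> Re (Q (n + m))" using psdQ by (simp add: psd_def)
    also have "Re (Q (n + m)) = Re (Q n) + of_nat m * Re G" by (simp add: Qm)
    finally show False using m by simp
  qed
  show ?thesis using ImG ReG G by (simp add: psd_def)
qed


theorem proposition4p1:
  fixes n :: nat
  shows
    \<comment> \<open>linearity of the symbol map on C(S^1)_(n)\<close>
    "(\<forall>f\<in>CS1n n. \<forall>g\<in>CS1n n. \<forall>c::complex. \<forall>a\<in>H2.
        toeplitz (\<lambda>z. f z + c * g z) a = (\<lambda>j. toeplitz f a j + c * toeplitz g a j))
     \<and> \<comment> \<open>unital: T_1 is the identity on H^2\<close>
     (\<forall>a\<in>H2. toeplitz one_S1 a = a)
     \<and> \<comment> \<open>injective on C(S^1)_(n) (hence a bijection onto T_(n))\<close>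
     (\<forall>f\<in>CS1n n. \<forall>g\<in>CS1n n. (\<forall>a\<in>H2. toeplitz f a = toeplitz g a) \<longrightarrow> f = g)
     \<and> \<comment> \<open>the map and its inverse are completely positive\<close>
     (\<forall>p::nat. \<forall>F :: nat \<Rightarrow> nat \<Rightarrow> complex \<Rightarrow> complex.
        (\<forall>i<p. \<forall>j<p. F i j \<in> CS1n n) \<longrightarrow>
        (fun_matrix_pos p F \<longleftrightarrow> op_matrix_pos p (\<lambda>i j. toeplitz (F i j))))"
  proof (intro conjI)
  show "\<forall>f\<in>CS1n n. \<forall>g\<in>CS1n n. \<forall>c::complex. \<forall>a\<in>H2.
        toeplitz (\<lambda>z. f z + c * g z) a = (\<lambda>j. toeplitz f a j + c * toeplitz g a j)"
    using part_linear by blast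
  show "\<forall>a\<in>H2. toeplitz one_S1 a = a" using part_unital by blast
  show "\<forall>f\<in>CS1n n. \<forall>g\<in>CS1n n. (\<forall>a\<in>H2. toeplitz f a = toeplitz g a) \<longrightarrow> f = g"
    using part_inj by blast
  show "\<forall>p::nat. \<forall>F :: nat \<Rightarrow> nat \<Rightarrow> complex \<Rightarrow> complex.
        (\<forall>i<p. \<forall>j<p. F i j \<in> CS1n n) \<longrightarrow>
        (fun_matrix_pos p F \<longleftrightarrow> op_matrix_pos p (\<lambda>i j. toeplitz (F i j)))"
  proof (intro allI impI)
    fix p and F :: "nat \<Rightarrow> nat \<Rightarrow> complex \<Rightarrow> complex"
    assume FC: "\<forall>i<p. \<forall>j<p. F i j \<in> CS1n n"
    show "fun_matrix_pos p F \<longleftrightarrow> op_matrix_pos p (\<lambda>i j. toeplitz (F i j))"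
    proof
      assume "fun_matrix_pos p F"
      then show "op_matrix_pos p (\<lambda>i j. toeplitz (F i j))"
        unfolding op_pos_iff using fwd FC by blast
    next
      assume "op_matrix_pos p (\<lambda>i j. toeplitz (F i j))"
      then show "fun_matrix_pos p F"
        unfolding op_pos_iff fun_pos_iff using bwd FC by blast
    qed
  qed
qed

end
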